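(* There exist two populations $P$ and $P'$ with the same users, intervals, speech points, disutilities $b_i$ and initial adopters $\mathcal S_0$, differing only in personalization parameters with $\lambda_i>\lambda_i'$ for all $i\in[n]$ (where $\lambda_i$ belongs to $P$ and $\lambda_i'$ to $P'$), such that $$s(P,I^* )>s(P',I^{*\prime}),$$ where $I^*$ and $I^{*\prime}$ are moderation windows maximizing $s(P,\cdot)$ and $s(P',\cdot)$ respectively. Moreover, for every $b>0$ and $\lambda\in(0,1]$ such a pair can be constructed with $b_1=\dots=b_n=b$, $\lambda_1=\dots=\lambda_n=\lambda$, and $\lambda_1'=\dots=\lambda_n'=\lambda'$ for some appropriately chosen $\lambda'$.
   Context: A population consists of users $1,\dots,n$ and a set $\mathcal S_0$ of initial adopters; user $i$ has a closed interval $[l_i,r_i]$, speech point $p_i\in[l_i,r_i]$, disutility $b_i\ge0$ and personalization parameter $\lambda_i\in[0,1]$. For $\mathcal S\subseteq[n]$, user $i$'s utility is $u_i(\mathcal S)=\sum_{j\in\mathcal S\setminus\{i\}}\big(\mathbf 1[p_j\in[l_i,r_i]]-\lambda_ib_i\mathbf 1[p_j\notin[l_i,r_i]]\big)$. A moderation window is a closed interval $I$; users with $p_i\notin I$ are banned and never on the platform. The platform starts with the non-banned initial adopters; a starvation-free switching order $\sigma:\mathbb Z_{>0}\to[n]$ lists each user infinitely often, and at time $t$ the non-banned user $\sigma(t)$ is on the platform after step $t$ iff $u_{\sigma(t)}(\mathcal W)\ge0$ where $\mathcal W$ is the current set of users on the platform; others are unchanged. With $\mathcal W(P,I,\sigma,t)$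 the set after step $t$, $s(P,I)=\min_\sigma\liminf_{t\to\infty}|\mathcal W(P,I,\sigma,t)|$ over starvation-free $\sigma$. *)

theory Defs
  imports Main "HOL-Library.Extended_Nat" "HOL-Library.Liminf_Limsup"
begin

text \<open>Users are indexed 0, ..., n-1 (the paper's users 1..n).\<close>

record pop =
  nusers :: nat
  lo :: "nat \<Rightarrow> real"
  hi :: "nat \<Rightarrow> real"
  pt :: "nat \<Rightarrow> real"
  dis :: "nat \<Rightarrow> real"
  lam :: "nat \<Rightarrow> real"
  init :: "nat set"

definition valid_pop :: "pop \<Rightarrow> bool" where
  "valid_pop P \<longleftrightarrow> nusers P \<ge> 1 \<and> init P \<subseteq> {..<nusers P} \<and>
     (\<forall>i<nusers P. lo P i \<le> pt P i \<and> pt P i \<le> hi P i \<and> dis P i \<ge> 0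
        \<and> 0 \<le> lam P i \<and> lam P i \<le> 1)"

definition util :: "pop \<Rightarrow> nat \<Rightarrow> nat set \<Rightarrow> real" where
  "util P i S = (\<Sum>j\<in>S - {i}. (if pt P j \<in> {lo P i..hi P i} then 1 else 0)
                   - lam P i * dis P i * (if pt P j \<notin> {lo P i..hi P i} then 1 else 0))"

definition windows :: "(real \<times> real) set" where
  "windows = {(a, c). a \<le> c}"

definition win :: "real \<times> real \<Rightarrow> real set" where
  "win I = {fst I..snd I}"

text \<open>Dynamics: state after step t; step t (t \<ge> 1) is performed by user sigma t.\<close>
fun dyn :: "pop \<Rightarrow> real \<times> real \<Rightarrow> (nat \<Rightarrow> nat) \<Rightarrow> nat \<Rightarrow> nat set" where
  "dyn P I \<sigma> 0 = {i \<in> init P. pt P i \<in> win I}"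
| "dyn P I \<sigma> (Suc t) =
     (let i = \<sigma> (Suc t); W = dyn P I \<sigma> t in
      if pt P i \<notin> win I then W
      else if util P i W \<ge> 0 then insert i W else W - {i})"

definition starvation_free :: "pop \<Rightarrow> (nat \<Rightarrow> nat) \<Rightarrow> bool" where
  "starvation_free P \<sigma> \<longleftrightarrow> (\<forall>t>0. \<sigma> t < nusers P) \<and>
     (\<forall>i<nusers P. infinite {t. t > 0 \<and> \<sigma> t = i})"

definition sval :: "pop \<Rightarrow> real \<times> real \<Rightarrow> enat" where
  "sval P I = Inf {Liminf sequentially (\<lambda>t. enat (card (dyn P I \<sigma> t))) | \<sigma>.
                   starvation_free P \<sigma>}"

definition optimal_window :: "pop \<Rightarrow> real \<times> real \<Rightarrow> bool" where
  "optimal_window P I \<longleftrightarrow> I \<in> windows \<and> (\<forall>J\<in>windows. sval P J \<le> sval P I)"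

definition prop6_pair :: "pop \<Rightarrow> pop \<Rightarrow> bool" where
  "prop6_pair P P' \<longleftrightarrow> valid_pop P \<and> valid_pop P' \<and> P' = P\<lparr>lam := lam P'\<rparr> \<and>
     (\<forall>i<nusers P. lam P i > lam P' i) \<and>
     (\<exists>I. optimal_window P I) \<and> (\<exists>I'. optimal_window P' I') \<and>
     (\<forall>I I'. optimal_window P I \<longrightarrow> optimal_window P' I' \<longrightarrow> sval P I > sval P' I')"

end

theory Submission
  imports Defs
begin


definition step :: "pop \<Rightarrow> real \<times> real \<Rightarrow> nat \<Rightarrow> nat set \<Rightarrow> nat set" where
  "step P I i W = (if pt P i \<notin> win I then W
      else if util P i W \<ge> 0 then insert i W else W - {i})"

lemma dyn_Suc: "dyn P I \<sigma> (Suc t) = step P I (\<sigma> (Suc t)) (dyn P I \<sigma> t)"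
  by (simp add: step_def Let_def)

lemma util_eq:
  assumes "finite S"
  shows "util P i S = real (card {j\<in>S-{i}. pt P j \<in> {lo P i..hi P i}})
     - lam P i * dis P i * real (card {j\<in>S-{i}. pt P j \<notin> {lo P i..hi P i}})"
proof -
  have f: "finite (S - {i})" using assms by simp
  have "util P i S = (\<Sum>j\<in>S-{i}. (if pt P j \<in> {lo P i..hi P i} then 1 else 0))
     - lam P i * dis P i * (\<Sum>j\<in>S-{i}. (if pt P j \<notin> {lo P i..hi P i} then 1 else 0))"
    unfolding util_def by (simp add: sum_subtractf sum_distrib_left)
  also have "\<dots> = real (card {j\<in>S-{i}. pt P j \<in> {lo P i..hi P i}})
     - lam P i * dis P i * real (card {j\<in>S-{i}. pt P j \<notin> {lo P i..hi P i}})"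
    using f by (simp add: sum.If_cases Int_def)
  finally show ?thesis .
qed

lemma util_ge:
  assumes "finite S" "A \<subseteq> {j\<in>S-{i}. pt P j \<in> {lo P i..hi P i}}"
    "{j\<in>S-{i}. pt P j \<notin> {lo P i..hi P i}} \<subseteq> B" "finite B" "lam P i * dis P i \<ge> 0"
  shows "util P i S \<ge> real (card A) - lam P i * dis P i * real (card B)"
proof -
  have "card A \<le> card {j\<in>S-{i}. pt P j \<in> {lo P i..hi P i}}"
    using assms by (intro card_mono) auto
  moreover have "card {j\<in>S-{i}. pt P j \<notin> {lo P i..hi P i}} \<le> card B"
    using assms by (intro card_mono) auto
  ultimately show ?thesis using assms(5) util_eq[OF assms(1), of P i]
    by (smt (verit) mult_left_mono of_nat_le_iff)
qed

lemma util_le: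
  assumes "finite S" "{j\<in>S-{i}. pt P j \<in> {lo P i..hi P i}} \<subseteq> B"
    "A \<subseteq> {j\<in>S-{i}. pt P j \<notin> {lo P i..hi P i}}" "finite B" "lam P i * dis P i \<ge> 0"
  shows "util P i S \<le> real (card B) - lam P i * dis P i * real (card A)"
proof -
  have "card A \<le> card {j\<in>S-{i}. pt P j \<notin> {lo P i..hi P i}}"
    using assms by (intro card_mono) auto
  moreover have "card {j\<in>S-{i}. pt P j \<in> {lo P i..hi P i}} \<le> card B"
    using assms by (intro card_mono) auto
  ultimately show ?thesis using assms(5) util_eq[OF assms(1), of P i]
    by (smt (verit) mult_left_mono of_nat_le_iff)
qed

lemma dyn_inv:
  assumes "Inv (dyn P I \<sigma> 0)" "\<And>W i. Inv W \<Longrightarrow> i < nusers P \<Longrightarrow> Inv (step P I i W)"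
    "\<forall>t>0. \<sigma> t < nusers P"
  shows "Inv (dyn P I \<sigma> t)"
proof (induction t)
  case 0 then show ?case using assms(1) by simp
next
  case (Suc t)
  have "\<sigma> (Suc t) < nusers P" using assms(3) by simp
  then show ?case unfolding dyn_Suc using assms(2) Suc by blast
qed

definition rr :: "nat \<Rightarrow> nat \<Rightarrow> nat" where "rr n t = (t - 1) mod n"

lemma rr_sf: assumes "nusers P \<ge> 1" shows "starvation_free P (rr (nusers P))"
  unfolding starvation_free_def
proof (intro conjI allI impI)
  fix t :: nat assume "t > 0" thus "rr (nusers P) t < nusers P" using assms by (simp add: rr_def)
next
  fix i assume i: "i < nusers P"
  show "infinite {t. t > 0 \<and> rr (nusers P) t = i}"
    unfolding infinite_nat_iff_unbounded
  proof
    fix m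
    let ?t = "i + 1 + (m+1) * nusers P"
    have "m \<le> m * nusers P" using assms by simp
    moreover have "?t = i + 1 + m * nusers P + nusers P" by (simp add: algebra_simps)
    ultimately have "?t > m" by linarith
    moreover have "rr (nusers P) ?t = (i + (m+1) * nusers P) mod nusers P" by (simp add: rr_def)
    hence "rr (nusers P) ?t = i" using i by (simp only: mod_mult_self1 mod_less)
    ultimately show "\<exists>t>m. t \<in> {t. t > 0 \<and> rr (nusers P) t = i}" by auto
  qed
qed

lemma sval_le:
  assumes "starvation_free P \<sigma>" "\<And>t. card (dyn P I \<sigma> t) \<le> m"
  shows "sval P I \<le> enat m"
proof -
  let ?L = "Liminf sequentially (\<lambda>t. enat (card (dyn P I \<sigma> t)))"
  have "Limsup sequentially (\<lambda>t. enat (card (dyn P I \<sigma> t))) \<le> enat m"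
    by (rule Limsup_bounded) (use assms(2) in \<open>simp add: always_eventually\<close>)
  moreover have "?L \<le> Limsup sequentially (\<lambda>t. enat (card (dyn P I \<sigma> t)))"
    by (rule Liminf_le_Limsup) simp
  ultimately have 1: "?L \<le> enat m" by (rule order_trans[rotated])
  have "?L \<in> {Liminf sequentially (\<lambda>t. enat (card (dyn P I \<sigma> t))) | \<sigma>. starvation_free P \<sigma>}"
    using assms(1) by blast
  hence "sval P I \<le> ?L" unfolding sval_def by (rule Inf_lower)
  thus ?thesis using 1 by (rule order_trans)
qed

lemma sval_ge:
  assumes "\<And>\<sigma>. starvation_free P \<sigma> \<Longrightarrow> \<exists>T. \<forall>t\<ge>T. card (dyn P I \<sigma> t) \<ge> m"
  shows "sval P I \<ge> enat m"
  unfolding sval_def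
proof (rule Inf_greatest)
  fix x assume "x \<in> {Liminf sequentially (\<lambda>t. enat (card (dyn P I \<sigma> t))) | \<sigma>. starvation_free P \<sigma>}"
  then obtain \<sigma> where x: "x = Liminf sequentially (\<lambda>t. enat (card (dyn P I \<sigma> t)))"
    and sf: "starvation_free P \<sigma>" by blast
  obtain T where T: "\<forall>t\<ge>T. card (dyn P I \<sigma> t) \<ge> m" using assms[OF sf] by blast
  have "eventually (\<lambda>t. enat m \<le> enat (card (dyn P I \<sigma> t))) sequentially"
    unfolding eventually_sequentially using T by auto
  thus "enat m \<le> x" unfolding x by (rule Liminf_bounded)
qed

lemma dyn_sub:
  assumes "init P \<subseteq> {..<nusers P}" "\<forall>t>0. \<sigma> t < nusers P"
  shows "dyn P I \<sigma> t \<subseteq> {i. i < nusers P \<and> pt P i \<in> win I}"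
  by (rule dyn_inv[where Inv="\<lambda>W. W \<subseteq> {i. i < nusers P \<and> pt P i \<in> win I}"])
     (use assms in \<open>auto simp: step_def\<close>)

lemma opt_exists:
  assumes "nusers P \<ge> 1" "init P \<subseteq> {..<nusers P}"
  shows "\<exists>I. optimal_window P I"
proof -
  have bd: "sval P J \<le> enat (nusers P)" for J
  proof (rule sval_le[OF rr_sf[OF assms(1)]])
    fix t
    have "dyn P J (rr (nusers P)) t \<subseteq> {..<nusers P}"
      using dyn_sub[OF assms(2), of "rr (nusers P)" J t] rr_sf[OF assms(1)]
      unfolding starvation_free_def by auto
    thus "card (dyn P J (rr (nusers P)) t) \<le> nusers P"
      by (metis card_lessThan card_mono finite_lessThan)
  qed
  let ?V = "sval P ` windows"
  have "?V \<subseteq> enat ` {..nusers P}"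
  proof
    fix x assume "x \<in> ?V"
    then obtain J where "x = sval P J" by auto
    then obtain k where k: "x = enat k" using bd[of J] \<open>x = sval P J\<close> enat_ile by blast
    hence "k \<le> nusers P" using bd[of J] \<open>x = sval P J\<close> by simp
    thus "x \<in> enat ` {..nusers P}" using k by auto
  qed
  hence fin: "finite ?V" by (rule finite_subset) simp
  have ne: "?V \<noteq> {}" unfolding windows_def by auto
  obtain I where I: "I \<in> windows" "sval P I = Max ?V" using Max_in[OF fin ne] by auto
  have "optimal_window P I" unfolding optimal_window_def
    using I fin by auto
  thus ?thesis by blast
qed



definition ptf :: "nat \<Rightarrow> nat \<Rightarrow> real" where
  "ptf d i = (if i < d*d then 2 else if i = d*d then 3 else if i < d*d+1+d then 1 else 0)"
definition lof :: "nat \<Rightarrow> nat \<Rightarrow> real" where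
  "lof d i = (if i < d*d then 2 else 0)"
definition hif :: "nat \<Rightarrow> nat \<Rightarrow> real" where
  "hif d i = (if d*d+1+d \<le> i then 1 else 3)"

definition mkpop :: "nat \<Rightarrow> real \<Rightarrow> real \<Rightarrow> pop" where
  "mkpop d b l = \<lparr>nusers = 2*d*d+d+2, lo = lof d, hi = hif d, pt = ptf d,
     dis = \<lambda>_. b, lam = \<lambda>_. l, init = {d*d..<d*d+1+d}\<rparr>"

lemma mk_simps[simp]: "nusers (mkpop d b l) = 2*d*d+d+2" "lo (mkpop d b l) = lof d"
  "hi (mkpop d b l) = hif d" "pt (mkpop d b l) = ptf d" "dis (mkpop d b l) i = b"
  "lam (mkpop d b l) i = l" "init (mkpop d b l) = {d*d..<d*d+1+d}"
  by (simp_all add: mkpop_def)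

abbreviation "Jset d \<equiv> {..<d*d}"
abbreviation "DK d \<equiv> {d*d..<d*d+1+d}"
abbreviation "Dset d \<equiv> {d*d+1..<d*d+1+d}"
abbreviation "Gset d \<equiv> {d*d+1+d..<2*d*d+d+2}"

lemma L1:
  assumes "i \<in> DK d" "finite W" "l*b \<ge> 0"
  shows "util (mkpop d b l) i W \<ge> 0"
proof -
  let ?P = "mkpop d b l"
  have "util ?P i W \<ge> real (card ({}::nat set)) - lam ?P i * dis ?P i * real (card ({}::nat set))"
    by (rule util_ge) (use assms in \<open>auto simp: ptf_def lof_def hif_def\<close>)
  thus ?thesis by simp
qed

lemma L2:
  assumes "i \<in> Gset d" "W \<subseteq> {..<2*d*d+d+2}" "Dset d \<subseteq> W" "W \<inter> Jset d = {}" "l*b \<ge> 0"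
  shows "util (mkpop d b l) i W \<ge> real d - l*b"
proof -
  let ?P = "mkpop d b l"
  have f: "finite W" using assms(2) finite_subset by blast
  have "util ?P i W \<ge> real (card (Dset d)) - lam ?P i * dis ?P i * real (card {d*d})"
    by (rule util_ge[OF f]) (use assms in \<open>auto simp: ptf_def lof_def hif_def\<close>)
  thus ?thesis by simp
qed

lemma L3:
  assumes "i \<in> Jset d" "W \<subseteq> {..<2*d*d+d+2}" "Dset d \<subseteq> W" "W \<inter> Jset d = {}" "l*b \<ge> 0"
  shows "util (mkpop d b l) i W \<le> real (card (W \<inter> {d*d})) - l*b * real d"
proof -
  let ?P = "mkpop d b l"
  have f: "finite W" using assms(2) finite_subset by blast
  have "util ?P i W \<le> real (card (W \<inter> {d*d})) - lam ?P i * dis ?P i * real (card (Dset d))"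
    by (rule util_le[OF f]) (use assms in \<open>auto simp: ptf_def lof_def hif_def\<close>)
  thus ?thesis by simp
qed

lemma L4:
  assumes "i \<in> Jset d" "W \<subseteq> {..<d*d+1+d}" "DK d \<subseteq> W" "l*b \<ge> 0"
  shows "util (mkpop d b l) i W \<ge> 1 - l*b * real d"
proof -
  let ?P = "mkpop d b l"
  have f: "finite W" using assms(2) finite_subset by blast
  have "util ?P i W \<ge> real (card {d*d}) - lam ?P i * dis ?P i * real (card (Dset d))"
    by (rule util_ge[OF f]) (use assms in \<open>auto simp: ptf_def lof_def hif_def\<close>)
  thus ?thesis by simp
qed

lemma L5:
  assumes "i \<in> Gset d" "W \<subseteq> {..<d*d+1+d}" "Jset d \<subseteq> W" "d*d \<in> W" "l*b \<ge> 0"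
  shows "util (mkpop d b l) i W \<le> real d - l*b * (real d * real d + 1)"
proof -
  let ?P = "mkpop d b l"
  have f: "finite W" using assms(2) finite_subset by blast
  have "util ?P i W \<le> real (card (Dset d)) - lam ?P i * dis ?P i * real (card {..d*d})"
    by (rule util_le[OF f]) (use assms in \<open>auto simp: ptf_def lof_def hif_def\<close>)
  thus ?thesis by (simp add: add.commute)
qed



lemma dyn0_all: "(\<And>i. pt P i \<in> win I) \<Longrightarrow> dyn P I \<sigma> 0 = init P" by simp

lemma card_le_sub: "A \<subseteq> B \<Longrightarrow> finite B \<Longrightarrow> card A \<le> card B"
  by (rule card_mono)

lemma M1:
  assumes r1: "l*b*real d > 1" and r2: "l*b \<le> real d" and r0: "l*b \<ge> 0"
  shows "sval (mkpop d b l) (0,3) \<ge> enat (d*d+d+2)"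
proof (rule sval_ge)
  fix \<sigma> assume sf: "starvation_free (mkpop d b l) \<sigma>"
  let ?P = "mkpop d b l"
  let ?n = "2*d*d+d+2"
  let ?I = "(0::real,3::real)"
  define Inv where "Inv W \<longleftrightarrow> W \<subseteq> {..<?n} \<and> DK d \<subseteq> W \<and> W \<inter> Jset d = {}" for W
  have winall: "pt ?P i \<in> win ?I" for i by (simp add: win_def ptf_def)
  have stepI: "step ?P ?I i W = (if util ?P i W \<ge> 0 then insert i W else W - {i})" for i W
    using winall[of i] by (simp add: step_def)
  have sfl: "\<forall>t>0. \<sigma> t < ?n" using sf unfolding starvation_free_def by simp
  have inv: "Inv (dyn ?P ?I \<sigma> t)" for t
  proof (rule dyn_inv[where Inv=Inv])
    show "\<forall>t>0. \<sigma> t < nusers ?P" using sfl by simp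
  next
    have "dyn ?P ?I \<sigma> 0 = DK d" using dyn0_all[OF winall, of \<sigma>] by (simp only: mk_simps)
    moreover have "Inv (DK d)" unfolding Inv_def by auto
    ultimately show "Inv (dyn ?P ?I \<sigma> 0)" by simp
  next
    fix W i assume W: "Inv W" and i: "i < nusers ?P"
    show "Inv (step ?P ?I i W)"
    proof (cases "i \<in> Jset d")
      case True
      have "util ?P i W \<le> real (card (W \<inter> {d*d})) - l*b * real d"
        by (rule L3) (use W True r0 in \<open>auto simp: Inv_def\<close>)
      moreover have "card (W \<inter> {d*d}) \<le> card {d*d}" by (rule card_mono) auto
      hence "real (card (W \<inter> {d*d})) \<le> 1" by simp
      ultimately have "util ?P i W < 0" using r1 by (simp add: mult.commute)
      hence "step ?P ?I i W = W - {i}" by (simp add: stepI)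
      thus ?thesis using W True unfolding Inv_def by auto
    next
      case nJ: False
      have finW: "finite W" using W unfolding Inv_def using finite_subset by blast
      show ?thesis
      proof (cases "util ?P i W \<ge> 0")
        case True
        hence "step ?P ?I i W = insert i W" by (simp add: stepI)
        thus ?thesis using W i nJ by (auto simp: Inv_def)
      next
        case nu: False
        hence "i \<notin> DK d" using L1[of i d W l b] finW r0 by auto
        moreover have "step ?P ?I i W = W - {i}" using nu by (simp add: stepI)
        ultimately show ?thesis using W by (auto simp: Inv_def)
      qed
    qed
  qed
  have fin: "finite (dyn ?P ?I \<sigma> t)" for t using inv[of t] unfolding Inv_def
    using finite_subset by blast
  have stayG: "\<forall>t\<ge>Suc t1. i \<in> dyn ?P ?I \<sigma> t" if iG: "i \<in> Gset d" and s: "\<sigma> (Suc t1) = i" for i t1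
  proof (intro allI impI)
    fix t assume "Suc t1 \<le> t"
    thus "i \<in> dyn ?P ?I \<sigma> t"
    proof (induction t rule: dec_induct)
      case base
      have "util ?P i (dyn ?P ?I \<sigma> t1) \<ge> real d - l*b"
        by (rule L2) (use inv[of t1] iG r0 in \<open>auto simp: Inv_def\<close>)
      hence "util ?P i (dyn ?P ?I \<sigma> t1) \<ge> 0" using r2 by linarith
      thus ?case unfolding dyn_Suc s stepI by simp
    next
      case (step t)
      show ?case
      proof (cases "\<sigma> (Suc t) = i")
        case True
        have "util ?P i (dyn ?P ?I \<sigma> t) \<ge> real d - l*b"
          by (rule L2) (use inv[of t] iG r0 in \<open>auto simp: Inv_def\<close>)
        hence "util ?P i (dyn ?P ?I \<sigma> t) \<ge> 0" using r2 by linarith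
        thus ?thesis unfolding dyn_Suc True stepI by simp
      next
        case False
        thus ?thesis using step.IH unfolding dyn_Suc stepI by auto
      qed
    qed
  qed
  have ev: "\<forall>\<^sub>F t in sequentially. i \<in> dyn ?P ?I \<sigma> t" if iG: "i \<in> Gset d" for i
  proof -
    have "i < ?n" using iG by simp
    hence "infinite {t. t > 0 \<and> \<sigma> t = i}" using sf unfolding starvation_free_def by simp
    hence "{t. t > 0 \<and> \<sigma> t = i} \<noteq> {}" by (metis finite.emptyI)
    then obtain t0 where "t0 > 0" "\<sigma> t0 = i" by auto
    then obtain t1 where "t0 = Suc t1" "\<sigma> (Suc t1) = i" using gr0_implies_Suc by blast
    thus ?thesis using stayG[OF iG] unfolding eventually_sequentially by blast
  qed
  have "\<forall>\<^sub>F t in sequentially. \<forall>i\<in>Gset d. i \<in> dyn ?P ?I \<sigma> t"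
    by (rule eventually_ball_finite) (use ev in auto)
  then obtain T where T: "\<forall>t\<ge>T. Gset d \<subseteq> dyn ?P ?I \<sigma> t"
    unfolding eventually_sequentially by blast
  show "\<exists>T. \<forall>t\<ge>T. d*d+d+2 \<le> card (dyn ?P ?I \<sigma> t)"
  proof (intro exI allI impI)
    fix t assume "T \<le> t"
    hence "Gset d \<subseteq> dyn ?P ?I \<sigma> t" using T by blast
    moreover have "DK d \<subseteq> dyn ?P ?I \<sigma> t" using inv[of t] unfolding Inv_def by blast
    moreover have "{d*d..<?n} \<subseteq> DK d \<union> Gset d" by auto
    ultimately have "{d*d..<?n} \<subseteq> dyn ?P ?I \<sigma> t" by blast
    hence "card {d*d..<?n} \<le> card (dyn ?P ?I \<sigma> t)" using fin by (rule card_mono[rotated])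
    thus "d*d+d+2 \<le> card (dyn ?P ?I \<sigma> t)" by simp
  qed
qed

lemma M2v:
  assumes r1: "l*b*real d = 1" and r0: "l*b \<ge> 0" and winall: "\<And>i. pt (mkpop d b l) i \<in> win I"
  shows "dyn (mkpop d b l) I (rr (2*d*d+d+2)) t \<subseteq> {..<d*d+1+d} \<and> DK d \<subseteq> dyn (mkpop d b l) I (rr (2*d*d+d+2)) t
                   \<and> {..<min t (d*d)} \<subseteq> dyn (mkpop d b l) I (rr (2*d*d+d+2)) t"
proof (induction t)
  let ?P = "mkpop d b l"
  let ?n = "2*d*d+d+2"
  let ?\<sigma> = "rr ?n"
  case 0
  have e: "dyn ?P I ?\<sigma> 0 = DK d" using dyn0_all[OF winall, of ?\<sigma>] by (simp only: mk_simps)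
  show ?case unfolding e by auto
next
  let ?P = "mkpop d b l"
  let ?n = "2*d*d+d+2"
  let ?\<sigma> = "rr ?n"
  have neq: "?n = d*d + (d*d+d+2)" by (simp add: algebra_simps)
  have stepI: "step ?P I i W = (if util ?P i W \<ge> 0 then insert i W else W - {i})" for i W
    using winall[of i] by (simp add: step_def)
  have rpos: "l*b > 0" using r1 r0 by (metis less_eq_real_def mult_zero_left zero_neq_one)
  case (Suc t)
  let ?W = "dyn ?P I ?\<sigma> t"
  let ?i = "t mod ?n"
  have fin: "finite ?W" using Suc.IH finite_subset by blast
  have si: "?\<sigma> (Suc t) = ?i" by (simp add: rr_def)
  have iN: "?i < ?n" by simp
  have small: "?i = t" if "t < d*d"
  proof -
    have "t < ?n" using that neq by linarith
    thus ?thesis by simp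
  qed
  show ?case
  proof (cases "?i \<in> DK d")
    case True
    have "util ?P ?i ?W \<ge> 0"
      by (rule L1) (use True r0 fin in auto)
    hence eq: "dyn ?P I ?\<sigma> (Suc t) = insert ?i ?W" unfolding dyn_Suc si stepI by simp
    have pre: "{..<min (Suc t) (d*d)} \<subseteq> insert ?i ?W"
    proof
      fix x assume x: "x \<in> {..<min (Suc t) (d*d)}"
      show "x \<in> insert ?i ?W"
      proof (cases "x = t")
        case True
        have "t < d*d" using x True by simp
        hence "?i = t" by (rule small)
        thus ?thesis using True by simp
      next
        case False
        hence "x \<in> {..<min t (d*d)}" using x by auto
        thus ?thesis using Suc.IH by blast
      qed
    qed
    have il: "?i < d*d+1+d" using True by simp
    have A: "insert ?i ?W \<subseteq> {..<d*d+1+d}" using il Suc.IH by blast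
    have B: "DK d \<subseteq> insert ?i ?W" using Suc.IH by blast
    show ?thesis unfolding eq using A B pre by blast
  next
    case nDK: False
    show ?thesis
    proof (cases "?i \<in> Jset d")
      case J: True
      have "util ?P ?i ?W \<ge> 1 - l*b * real d"
        by (rule L4) (use J Suc.IH r0 in auto)
      hence u: "util ?P ?i ?W \<ge> 0" using r1 by simp
      have pre: "{..<min (Suc t) (d*d)} \<subseteq> insert ?i ?W"
      proof (cases "t < d*d")
        case True
        hence it: "?i = t" by (rule small)
        have "min (Suc t) (d*d) = Suc t" "min t (d*d) = t" using True by auto
        hence e2: "{..<min (Suc t) (d*d)} = insert t {..<min t (d*d)}" by (simp add: lessThan_Suc)
        have "insert t {..<min t (d*d)} \<subseteq> insert t ?W" using Suc.IH by blast
        thus ?thesis unfolding e2 it .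
      next
        case False
        hence e2: "min (Suc t) (d*d) = min t (d*d)" by simp
        have "{..<min t (d*d)} \<subseteq> insert ?i ?W" using Suc.IH by blast
        thus ?thesis unfolding e2 .
      qed
      have eq: "dyn ?P I ?\<sigma> (Suc t) = insert ?i ?W" unfolding dyn_Suc si stepI using u by simp
      have il: "?i < d*d+1+d" using J by simp
      have A: "insert ?i ?W \<subseteq> {..<d*d+1+d}" using il Suc.IH by blast
      have B: "DK d \<subseteq> insert ?i ?W" using Suc.IH by blast
      show ?thesis unfolding eq using A B pre by blast
    next
      case nJ: False
      hence G: "?i \<in> Gset d" using nDK iN by auto
      have tge: "\<not> t < d*d"
      proof
        assume "t < d*d" hence "?i = t" by (rule small)
        thus False using nJ \<open>t < d*d\<close> by simp
      qed
      hence mt: "min t (d*d) = d*d" "min (Suc t) (d*d) = d*d" by auto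
      hence Jsub: "Jset d \<subseteq> ?W" using Suc.IH by simp
      have "util ?P ?i ?W \<le> real d - l*b * (real d * real d + 1)"
        by (rule L5) (use G Suc.IH Jsub r0 in auto)
      also have "\<dots> = - (l*b)" using r1 by (simp add: algebra_simps)
      finally have "util ?P ?i ?W < 0" using rpos by linarith
      hence eq: "dyn ?P I ?\<sigma> (Suc t) = ?W - {?i}" unfolding dyn_Suc si stepI by simp
      have A: "?W - {?i} \<subseteq> {..<d*d+1+d}" using Suc.IH by blast
      have B: "DK d \<subseteq> ?W - {?i}" using Suc.IH nDK by blast
      have C: "Jset d \<subseteq> ?W - {?i}" using Jsub nJ by blast
      show ?thesis unfolding eq mt(2) using A B C by blast
    qed
  qed
qed
lemma M2:
  assumes r1: "l*b*real d = 1" and d1: "d \<ge> 1" and r0: "l*b \<ge> 0" and I: "I \<in> windows"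
  shows "sval (mkpop d b l) I \<le> enat (d*d+d+1)"
proof -
  let ?P = "mkpop d b l"
  let ?n = "2*d*d+d+2"
  let ?\<sigma> = "rr ?n"
  obtain a c where ac: "I = (a,c)" "a \<le> c" using I unfolding windows_def by auto
  have sf: "starvation_free ?P ?\<sigma>" using rr_sf[of ?P] by simp
  have sfl: "\<forall>t>0. ?\<sigma> t < nusers ?P" using sf unfolding starvation_free_def by simp
  have dsub: "dyn ?P I ?\<sigma> t \<subseteq> {i. i < ?n \<and> ptf d i \<in> {a..c}}" for t
  proof -
    have initsub: "init ?P \<subseteq> {..<nusers ?P}" by auto
    show ?thesis using dyn_sub[OF initsub sfl, of I t] ac by (simp add: win_def)
  qed
  have fin: "finite (dyn ?P I ?\<sigma> t)" for t using dsub[of t] by (rule finite_subset) auto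
  have bound: "card (dyn ?P I ?\<sigma> t) \<le> d*d+d+1" for t
  proof (cases "a \<le> 0 \<and> 0 \<le> c")
    case False
    have "dyn ?P I ?\<sigma> t \<subseteq> {..<d*d+1+d}"
    proof
      fix i assume "i \<in> dyn ?P I ?\<sigma> t"
      hence "ptf d i \<in> {a..c}" using dsub by auto
      with False show "i \<in> {..<d*d+1+d}" by (auto simp: ptf_def split: if_splits)
    qed
    hence "card (dyn ?P I ?\<sigma> t) \<le> card {..<d*d+1+d}" by (rule card_mono[rotated]) simp
    thus ?thesis by simp
  next
    case a0: True
    show ?thesis
    proof (cases "c < 2")
      case True
      have "dyn ?P I ?\<sigma> t \<subseteq> {d*d+1..<?n}"
      proof
        fix i assume "i \<in> dyn ?P I ?\<sigma> t"
        hence "ptf d i \<in> {a..c}" "i < ?n" using dsub by auto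
        with True show "i \<in> {d*d+1..<?n}" by (auto simp: ptf_def split: if_splits)
      qed
      hence "card (dyn ?P I ?\<sigma> t) \<le> card {d*d+1..<?n}" by (rule card_mono[rotated]) simp
      thus ?thesis by simp
    next
      case c2: False
      show ?thesis
      proof (cases "c < 3")
        case True
        define Inv where "Inv W \<longleftrightarrow> W \<subseteq> {i. i < ?n \<and> ptf d i \<in> {a..c}} \<and> Dset d \<subseteq> W \<and> W \<inter> Jset d = {}" for W
        have inv: "Inv (dyn ?P I ?\<sigma> t)"
        proof (rule dyn_inv[where Inv=Inv])
          show "\<forall>t>0. ?\<sigma> t < nusers ?P" using sfl by simp
        next
          show "Inv (dyn ?P I ?\<sigma> 0)" using a0 c2 True ac
            by (auto simp: Inv_def win_def ptf_def split: if_splits)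
        next
          fix W i assume W: "Inv W" and i: "i < nusers ?P"
          have ndd: "d*d \<notin> W" using W True by (auto simp: Inv_def ptf_def)
          show "Inv (step ?P I i W)"
          proof (cases "i \<in> Jset d")
            case J: True
            have "util ?P i W \<le> real (card (W \<inter> {d*d})) - l*b * real d"
              by (rule L3) (use W J r0 in \<open>auto simp: Inv_def\<close>)
            moreover have "W \<inter> {d*d} = {}" using ndd by auto
            ultimately have "util ?P i W < 0" using r1 by simp
            hence "step ?P I i W = W \<or> step ?P I i W = W - {i}" unfolding step_def by simp
            thus ?thesis using W J unfolding Inv_def by auto
          next
            case nJ: False
            show ?thesis
            proof (cases "i \<in> Dset d \<and> pt ?P i \<in> win I")
              case True
              have "util ?P i W \<ge> 0"
                by (rule L1) (use True W r0 in \<open>auto simp: Inv_def intro: finite_subset\<close>)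
              hence "step ?P I i W = insert i W" using True unfolding step_def by simp
              thus ?thesis using W True i ac unfolding Inv_def by (auto simp: win_def)
            next
              case False
              have "i \<notin> Dset d" if "pt ?P i \<in> win I" using False that by blast
              moreover have "Dset d \<subseteq> W - {i}" if "i \<notin> Dset d" using W that unfolding Inv_def by auto
              ultimately show ?thesis using W nJ i ac unfolding step_def Inv_def
                by (auto simp: win_def)
            qed
          qed
        qed
        have "dyn ?P I ?\<sigma> t \<subseteq> {d*d+1..<?n}"
        proof
          fix i assume i: "i \<in> dyn ?P I ?\<sigma> t"
          hence "ptf d i \<in> {a..c}" "i < ?n" "i \<notin> Jset d" using inv unfolding Inv_def by auto
          with True show "i \<in> {d*d+1..<?n}" by (auto simp: ptf_def split: if_splits)
        qed
        hence "card (dyn ?P I ?\<sigma> t) \<le> card {d*d+1..<?n}" by (rule card_mono[rotated]) simp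
        thus ?thesis by simp
      next
        case c3: False
        have winall: "pt ?P i \<in> win I" for i using a0 c3 ac by (auto simp: win_def ptf_def)
        have "dyn ?P I ?\<sigma> t \<subseteq> {..<d*d+1+d}" using M2v[OF r1 r0 winall] by blast
        hence "card (dyn ?P I ?\<sigma> t) \<le> card {..<d*d+1+d}" by (rule card_mono[rotated]) simp
        thus ?thesis by simp
      qed
    qed
  qed
  show ?thesis by (rule sval_le[OF sf bound])
qed

lemma main_constr:
  fixes b l :: real
  assumes b: "b > 0" and l: "0 < l" "l \<le> 1"
  shows "\<exists>P P' l'. prop6_pair P P' \<and> (\<forall>i<nusers P. dis P i = b \<and> lam P i = l \<and> lam P' i = l')"
proof -
  define r where "r = l*b"
  have r0: "r > 0" using b l by (simp add: r_def)
  obtain d :: nat where d: "real d > 1/r + r + 1/b" using reals_Archimedean2 by blast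
  have "1/r > 0" "1/b > 0" using r0 b by auto
  hence dr: "real d > 1/r" "real d > r" "real d > 1/b" using d r0 by linarith+
  have rd: "r * real d > 1" using dr(1) r0 by (simp add: field_simps)
  have bd: "b * real d > 1" using dr(3) b by (simp add: field_simps)
  have d1: "d \<ge> 1" using dr(2) r0 by (cases d) auto
  define l' where "l' = 1/(real d * b)"
  have dpos: "real d > 0" using d1 by simp
  have l'b: "l' * b * real d = 1" using b dpos by (simp add: l'_def field_simps)
  have l'0: "l' \<ge> 0" using b dpos by (simp add: l'_def)
  have l'1: "l' \<le> 1" using bd by (simp add: l'_def field_simps mult.commute)
  have l'l: "l' < l" using rd b dpos by (simp add: l'_def r_def field_simps mult.commute mult.left_commute)
  define P where "P = mkpop d b l"
  define P' where "P' = mkpop d b l'"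
  have vP: "valid_pop (mkpop d b x)" if "0 \<le> x" "x \<le> 1" for x
    unfolding valid_pop_def using b that by (auto simp: ptf_def lof_def hif_def)
  have eq: "P' = P\<lparr>lam := lam P'\<rparr>" by (simp add: P_def P'_def mkpop_def)
  have oP: "\<exists>I. optimal_window P I" by (rule opt_exists) (auto simp: P_def)
  have oP': "\<exists>I. optimal_window P' I" by (rule opt_exists) (auto simp: P'_def)
  have w03: "(0::real, 3::real) \<in> windows" by (simp add: windows_def)
  have strict: "sval P I > sval P' I'" if "optimal_window P I" "optimal_window P' I'" for I I'
  proof -
    have "sval P (0,3) \<le> sval P I" using that(1) w03 unfolding optimal_window_def by blast
    moreover have "enat (d*d+d+2) \<le> sval P (0,3)" unfolding P_def
      by (rule M1) (use rd r0 dr in \<open>auto simp: r_def\<close>)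
    moreover have "sval P' I' \<le> enat (d*d+d+1)" unfolding P'_def
      by (rule M2) (use l'b d1 l'0 b that(2) in \<open>auto simp: optimal_window_def\<close>)
    moreover have "enat (d*d+d+1) < enat (d*d+d+2)" by simp
    ultimately show ?thesis by (meson order_le_less_trans order_less_le_trans)
  qed
  have "prop6_pair P P'"
    unfolding prop6_pair_def using vP[of l] vP[of l'] l l'0 l'1 eq oP oP' strict l'l
    by (auto simp: P_def P'_def)
  moreover have "\<forall>i<nusers P. dis P i = b \<and> lam P i = l \<and> lam P' i = l'"
    by (simp add: P_def P'_def)
  ultimately show ?thesis by blast
qed

theorem proposition6:
  shows "(\<exists>P P'. prop6_pair P P') \<and>
    (\<forall>(b::real) (l::real). b > 0 \<longrightarrow> 0 < l \<longrightarrow> l \<le> 1 \<longrightarrow>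
       (\<exists>P P' l'. prop6_pair P P' \<and>
          (\<forall>i<nusers P. dis P i = b \<and> lam P i = l \<and> lam P' i = l')))"
proof (intro conjI allI impI)
  show "\<exists>P P'. prop6_pair P P'" using main_constr[of 1 1] by auto
next
  fix b l :: real assume "b > 0" "0 < l" "l \<le> 1"
  thus "\<exists>P P' l'. prop6_pair P P' \<and> (\<forall>i<nusers P. dis P i = b \<and> lam P i = l \<and> lam P' i = l')"
    by (rule main_constr)
qed

end
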